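(* Let $\zeta\equiv\Phi$ or $\zeta\equiv1$, $t\ge0$, $n\in\mathbb N^*$, and $(x_1,\dots,x_n)\in\Delta_{(n)}\cap((0,t]\times\mathbb{R}_+)^n$, $x_i=(t_i,\theta_i)$. Then $$c_n^{\zeta,t}(x_1,\dots,x_n)=c_n^{\zeta,t}(x_1,\dots,x_n)\,\mathbf 1_{\{\theta_1\le\mu\}}\prod_{i=2}^n\mathbf 1_{\{\theta_i\le\mu+\sum_{j=1}^{i-1}\Phi(t_i-t_j)\}}.$$
   Context: Let $\mu>0$ and $\Phi:\mathbb{R}_+\to\mathbb{R}_+$ integrable with $\int_0^\infty\Phi<1$. Let $\mathbb X=\mathbb{R}_+\times\mathbb{R}_+$, points $x=(t,\theta)$, and $\Delta_{(n)}:=\{((t_1,\theta_1),\dots,(t_n,\theta_n))\in\mathbb X^n: t_1<\dots<t_n\}$. Let $\Omega$ be the space of configurations $\omega=\sum_i\delta_{x_i}$ on $\mathbb X$ with $\mathbb P$ the Poisson measure making the canonical measure $N(\omega)=\omega$ a Poisson random measure of intensity $dt\,d\theta$. Let $\lambda$ be the unique pathwise solution of $\lambda_t=\mu+\int_{(0,t)\times\mathbb{R}_+}\Phi(t-s)\mathbf 1_{\{\theta\le\lambda_s\}}N(ds,d\theta)$, and for $\zeta\in\{\Phi,1\}$ set $X^\zeta_t:=\int_{(0,t)\times\mathbb{R}_+}\zeta(t-s)\mathbf 1_{\{\theta\le\lambda_s\}}N(ds,d\theta)$. For $x_1,\dots,x_n$ with $t_1<\dots<t_n$ and a functional $F$ of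 $\omega$, $\mathcal D^n_{(x_1,\dots,x_n)}F:=\sum_{J\subset\{x_1,\dots,x_n\}}(-1)^{n-|J|}F(\sum_{y\in J}\delta_y)$. Define $c_n^{\zeta,t}(x_1,\dots,x_n):=\mathcal D^n_{(x_{(1)},\dots,x_{(n)})}X^\zeta_t$, where $(x_{(1)},\dots,x_{(n)})$ is the reordering by increasing time coordinate. *)

theory Defs
  imports "HOL-Analysis.Analysis"
begin

text \<open>A finite configuration of points x = (t, theta) of R+ x R+ is represented by a
finite set of pairs.\<close>

function hawkes_lambda :: "real \<Rightarrow> (real \<Rightarrow> real) \<Rightarrow> (real \<times> real) set \<Rightarrow> real \<Rightarrow> real" where
  "hawkes_lambda \<mu> \<Phi> \<omega> t =
     (if finite \<omega> then
        \<mu> + (\<Sum>x\<in>{x\<in>\<omega>. 0 < fst x \<and> fst x < t}.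
               (if snd x \<le> hawkes_lambda \<mu> \<Phi> \<omega> (fst x) then \<Phi> (t - fst x) else 0))
      else 0)"
  by auto
termination
proof (relation "Wellfounded.measure (\<lambda>(\<mu>, \<Phi>, \<omega>, t). card {x\<in>\<omega>. 0 < fst x \<and> fst x < t})")
  show "wf (Wellfounded.measure (\<lambda>(\<mu>, \<Phi>, \<omega>, t). card {x\<in>\<omega>. 0 < fst x \<and> fst x < t}))" by simp
next
  fix \<mu> :: real and \<Phi> :: "real \<Rightarrow> real" and \<omega> :: "(real \<times> real) set" and t x
  assume fin: "finite \<omega>" and x: "x \<in> {x\<in>\<omega>. 0 < fst x \<and> fst x < t}"
  have "{y\<in>\<omega>. 0 < fst y \<and> fst y < fst x} \<subset> {y\<in>\<omega>. 0 < fst y \<and> fst y < t}"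
    using x by auto
  then have "card {y\<in>\<omega>. 0 < fst y \<and> fst y < fst x} < card {y\<in>\<omega>. 0 < fst y \<and> fst y < t}"
    using fin by (intro psubset_card_mono) auto
  then show "((\<mu>, \<Phi>, \<omega>, fst x), \<mu>, \<Phi>, \<omega>, t)
     \<in> Wellfounded.measure (\<lambda>(\<mu>, \<Phi>, \<omega>, t). card {x\<in>\<omega>. 0 < fst x \<and> fst x < t})" by simp
qed

definition hawkes_X :: "real \<Rightarrow> (real \<Rightarrow> real) \<Rightarrow> (real \<Rightarrow> real) \<Rightarrow> real \<Rightarrow> (real \<times> real) set \<Rightarrow> real" where
  "hawkes_X \<mu> \<Phi> \<zeta> t \<omega> =
     (\<Sum>x\<in>{x\<in>\<omega>. 0 < fst x \<and> fst x < t}.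
        (if snd x \<le> hawkes_lambda \<mu> \<Phi> \<omega> (fst x) then \<zeta> (t - fst x) else 0))"

definition diff_op :: "(real \<times> real) list \<Rightarrow> ((real \<times> real) set \<Rightarrow> real) \<Rightarrow> real" where
  "diff_op xs F = (\<Sum>J\<in>Pow (set xs). (-1) ^ (length xs - card J) * F J)"

definition c_coef :: "real \<Rightarrow> (real \<Rightarrow> real) \<Rightarrow> (real \<Rightarrow> real) \<Rightarrow> real \<Rightarrow> (real \<times> real) list \<Rightarrow> real" where
  "c_coef \<mu> \<Phi> \<zeta> t xs = diff_op (sort_key fst xs) (hawkes_X \<mu> \<Phi> \<zeta> t)"

end

theory Submission imports Defs begin

declare hawkes_lambda.simps[simp del]

lemma cancel_pow:
  fixes F :: "'a set \<Rightarrow> real"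
  assumes fin: "finite S" and aS: "a \<in> S" and m: "card S = m"
    and F: "\<And>J. J \<subseteq> S \<Longrightarrow> a \<in> J \<Longrightarrow> F J = F (J - {a})"
  shows "(\<Sum>J\<in>Pow S. (-1) ^ (m - card J) * F J) = 0"
proof -
  define A where "A = S - {a}"
  have S: "S = insert a A" and aA: "a \<notin> A" and finA: "finite A" using aS fin by (auto simp: A_def)
  have m1: "m \<ge> 1" using m aS fin card_gt_0_iff[of S] by fastforce
  have cA: "card A = m - 1" "m \<ge> 1" using m aS fin m1 by (auto simp: A_def card_Diff_singleton)
  have disj: "Pow A \<inter> insert a ` Pow A = {}" using aA by auto
  have inj: "inj_on (insert a) (Pow A)" using aA by (auto simp: inj_on_def)
  have "(\<Sum>J\<in>insert a ` Pow A. (-1) ^ (m - card J) * F J)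
        = (\<Sum>K\<in>Pow A. (-1) ^ (m - card (insert a K)) * F (insert a K))"
    by (subst sum.reindex[OF inj]) simp
  also have "\<dots> = (\<Sum>K\<in>Pow A. - ((-1) ^ (m - card K) * F K))"
  proof (rule sum.cong[OF refl])
    fix K assume K: "K \<in> Pow A"
    then have fK: "finite K" and aK: "a \<notin> K" using finA aA by (auto intro: finite_subset)
    have ck: "card K \<le> m - 1" using card_mono[OF finA] K cA by auto
    have c: "card (insert a K) = Suc (card K)" using fK aK by simp
    have e: "m - card K = Suc (m - Suc (card K))" using ck cA by linarith
    have FK: "F (insert a K) = F K" using F[of "insert a K"] K S aK by auto
    show "(-1) ^ (m - card (insert a K)) * F (insert a K) = - ((-1) ^ (m - card K) * F K)"
      by (simp add: c e FK)
  qed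
  finally have "(\<Sum>J\<in>insert a ` Pow A. (-1) ^ (m - card J) * F J) = - (\<Sum>K\<in>Pow A. (-1) ^ (m - card K) * F K)"
    by (simp add: sum_negf)
  moreover have "(\<Sum>J\<in>Pow S. (-1) ^ (m - card J) * F J) = (\<Sum>J\<in>Pow A. (-1) ^ (m - card J) * F J) + (\<Sum>J\<in>insert a ` Pow A. (-1) ^ (m - card J) * F J)"
    unfolding S Pow_insert by (rule sum.union_disjoint) (use finA disj in auto)
  ultimately show ?thesis by simp
qed

lemma lam_eq:
  assumes fin: "finite J" and aJ: "a \<in> J" and na: "\<not> snd a \<le> hawkes_lambda \<mu> \<Phi> J (fst a)"
  shows "hawkes_lambda \<mu> \<Phi> J s = hawkes_lambda \<mu> \<Phi> (J - {a}) s"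
proof (induction "card {x\<in>J. 0 < fst x \<and> fst x < s}" arbitrary: s rule: less_induct)
  case less
  define A where "A = {x\<in>J. 0 < fst x \<and> fst x < s}"
  define A' where "A' = {x\<in>J - {a}. 0 < fst x \<and> fst x < s}"
  define g where "g = (\<lambda>K x. if snd x \<le> hawkes_lambda \<mu> \<Phi> K (fst x) then \<Phi> (s - fst x) else 0)"
  have finA: "finite A'" using fin by (auto simp: A'_def)
  have IH: "hawkes_lambda \<mu> \<Phi> J (fst y) = hawkes_lambda \<mu> \<Phi> (J - {a}) (fst y)" if y: "y \<in> A'" for y
  proof (rule less)
    have "{x\<in>J. 0 < fst x \<and> fst x < fst y} \<subset> {x\<in>J. 0 < fst x \<and> fst x < s}"
      using y by (auto simp: A'_def)
    then show "card {x\<in>J. 0 < fst x \<and> fst x < fst y} < card {x\<in>J. 0 < fst x \<and> fst x < s}"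
      using fin by (intro psubset_card_mono) auto
  qed
  have "sum (g J) A = sum (g J) A'"
  proof (cases "a \<in> A")
    case True
    then have "A = insert a A'" "a \<notin> A'" by (auto simp: A_def A'_def)
    then show ?thesis using finA na by (simp add: g_def)
  next
    case False
    then have "A = A'" by (auto simp: A_def A'_def)
    then show ?thesis by simp
  qed
  also have "\<dots> = sum (g (J - {a})) A'" using IH by (auto simp: g_def intro!: sum.cong)
  finally have "sum (g J) A = sum (g (J - {a})) A'" .
  then show ?case
    apply (subst hawkes_lambda.simps)
    apply (subst (2) hawkes_lambda.simps)
    using fin by (simp add: A_def A'_def g_def)
qed

lemma X_eq:
  assumes fin: "finite J" and aJ: "a \<in> J" and na: "\<not> snd a \<le> hawkes_lambda \<mu> \<Phi> J (fst a)"
  shows "hawkes_X \<mu> \<Phi> \<zeta> t J = hawkes_X \<mu> \<Phi> \<zeta> t (J - {a})"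
proof -
  define A where "A = {x\<in>J. 0 < fst x \<and> fst x < t}"
  define A' where "A' = {x\<in>J - {a}. 0 < fst x \<and> fst x < t}"
  define g where "g = (\<lambda>K x. if snd x \<le> hawkes_lambda \<mu> \<Phi> K (fst x) then \<zeta> (t - fst x) else 0)"
  have finA: "finite A'" using fin by (auto simp: A'_def)
  have "sum (g J) A = sum (g J) A'"
  proof (cases "a \<in> A")
    case True
    then have "A = insert a A'" "a \<notin> A'" by (auto simp: A_def A'_def)
    then show ?thesis using finA na by (simp add: g_def)
  next
    case False
    then have "A = A'" by (auto simp: A_def A'_def)
    then show ?thesis by simp
  qed
  also have "\<dots> = sum (g (J - {a})) A'" using lam_eq[OF fin aJ na] by (auto simp: g_def intro!: sum.cong)
  finally show ?thesis by (simp add: hawkes_X_def A_def A'_def g_def)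
qed

theorem lemma5p1:
  fixes \<mu> t :: real and \<Phi> \<zeta> :: "real \<Rightarrow> real" and n :: nat and xs :: "(real \<times> real) list"
  assumes mu_pos: "\<mu> > 0"
    and Phi_nonneg: "\<forall>s\<ge>0. \<Phi> s \<ge> 0"
    and Phi_int: "\<Phi> integrable_on {0..}"
    and Phi_lt1: "integral {0..} \<Phi> < 1"
    and zeta: "\<zeta> = \<Phi> \<or> \<zeta> = (\<lambda>_. 1)"
    and t_nonneg: "t \<ge> 0"
    and n_pos: "n \<ge> 1"
    and len: "length xs = n"
    and ordered: "sorted_wrt (\<lambda>a b. fst a < fst b) xs"
    and in_box: "\<forall>x\<in>set xs. 0 < fst x \<and> fst x \<le> t \<and> 0 \<le> snd x"
  shows "c_coef \<mu> \<Phi> \<zeta> t xs =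
           c_coef \<mu> \<Phi> \<zeta> t xs
           * (if snd (xs ! 0) \<le> \<mu> then 1 else 0)
           * (\<Prod>i\<in>{1..<n}.
                if snd (xs ! i) \<le> \<mu> + (\<Sum>j<i. \<Phi> (fst (xs ! i) - fst (xs ! j))) then 1 else 0)"
proof -
  have dist: "distinct xs"
  proof -
    have "sorted_wrt (<) (map fst xs)" using ordered by (simp add: sorted_wrt_map)
    then have "distinct (map fst xs)" by (simp add: strict_sorted_iff)
    then show ?thesis by (simp add: distinct_map)
  qed
  have srt: "sort_key fst xs = xs"
  proof (rule sort_key_id_if_sorted)
    have "sorted_wrt (\<lambda>a b. fst a \<le> fst b) xs"
      by (rule sorted_wrt_mono_rel[OF _ ordered]) auto
    then show "sorted (map fst xs)" by (simp add: sorted_wrt_map)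
  qed
  have cardS: "card (set xs) = n" using dist len by (simp add: distinct_card)
  show ?thesis
  proof (cases "\<exists>i<n. \<not> snd (xs ! i) \<le> \<mu> + (\<Sum>j<i. \<Phi> (fst (xs ! i) - fst (xs ! j)))")
    case False
    then have "snd (xs ! 0) \<le> \<mu>" using n_pos by fastforce
    moreover have "(\<Prod>i\<in>{1..<n}.
                if snd (xs ! i) \<le> \<mu> + (\<Sum>j<i. \<Phi> (fst (xs ! i) - fst (xs ! j))) then 1 else 0) = (1::real)"
      using False by (intro prod.neutral) auto
    ultimately show ?thesis by simp
  next
    case True
    then obtain i where i: "i < n" and ni: "\<not> snd (xs ! i) \<le> \<mu> + (\<Sum>j<i. \<Phi> (fst (xs ! i) - fst (xs ! j)))"
      by blast
    define a where "a = xs ! i"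
    have aS: "a \<in> set xs" using i len by (simp add: a_def)
    define B where "B = {y\<in>set xs. fst y < fst a}"
    have B: "B = (!) xs ` {..<i}"
    proof
      show "B \<subseteq> (!) xs ` {..<i}"
      proof
        fix y assume "y \<in> B"
        then obtain j where j: "j < n" "y = xs ! j" and lt: "fst (xs ! j) < fst (xs ! i)"
          using len by (auto simp: B_def a_def in_set_conv_nth)
        have "j < i"
        proof (rule ccontr)
          assume "\<not> j < i"
          then have "j = i \<or> i < j" by auto
          then show False using lt sorted_wrt_nth_less[OF ordered, of i j] j len by auto
        qed
        then show "y \<in> (!) xs ` {..<i}" using j by auto
      qed
    next
      show "(!) xs ` {..<i} \<subseteq> B"
        using sorted_wrt_nth_less[OF ordered, of _ i] i len by (auto simp: B_def a_def)
    qed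
    have injB: "inj_on ((!) xs) {..<i}"
      using inj_on_nth[OF dist, of "{..<i}"] i len by auto
    have sumB: "(\<Sum>y\<in>B. \<Phi> (fst a - fst y)) = (\<Sum>j<i. \<Phi> (fst (xs ! i) - fst (xs ! j)))"
      unfolding B by (subst sum.reindex[OF injB]) (simp add: a_def)
    have notacc: "\<not> snd a \<le> hawkes_lambda \<mu> \<Phi> J (fst a)" if J: "J \<subseteq> set xs" for J
    proof -
      have finJ: "finite J" using J finite_subset by blast
      define A where "A = {x\<in>J. 0 < fst x \<and> fst x < fst a}"
      have AB: "A \<subseteq> B" using J by (auto simp: A_def B_def)
      have nn: "\<Phi> (fst a - fst y) \<ge> 0" if "y \<in> B" for y using that Phi_nonneg by (auto simp: B_def)
      have "hawkes_lambda \<mu> \<Phi> J (fst a) = \<mu> + (\<Sum>x\<in>A. (if snd x \<le> hawkes_lambda \<mu> \<Phi> J (fst x) then \<Phi> (fst a - fst x) else 0))"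
        by (subst hawkes_lambda.simps) (simp add: finJ A_def)
      also have "\<dots> \<le> \<mu> + (\<Sum>x\<in>A. \<Phi> (fst a - fst x))"
        using AB nn by (intro add_left_mono sum_mono) auto
      also have "\<dots> \<le> \<mu> + (\<Sum>x\<in>B. \<Phi> (fst a - fst x))"
        using AB nn by (intro add_left_mono sum_mono2) (auto simp: B_def)
      finally show ?thesis using ni sumB by (simp add: a_def)
    qed
    have "c_coef \<mu> \<Phi> \<zeta> t xs = (\<Sum>J\<in>Pow (set xs). (-1) ^ (n - card J) * hawkes_X \<mu> \<Phi> \<zeta> t J)"
      by (simp add: c_coef_def srt diff_op_def len)
    also have "\<dots> = 0"
    proof (rule cancel_pow[OF _ aS cardS])
      fix J assume J: "J \<subseteq> set xs" "a \<in> J"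
      show "hawkes_X \<mu> \<Phi> \<zeta> t J = hawkes_X \<mu> \<Phi> \<zeta> t (J - {a})"
        using X_eq[OF _ J(2) notacc[OF J(1)]] J(1) finite_subset by blast
    qed simp
    finally show ?thesis by simp
  qed
qed

end
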